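(* Let $\delta$ be an $\mathfrak l_m$-dominant integral weight, let $k\ge k'$ be non-negative integers, and let $K\in\kappa(\delta,k)$ and $K'\in\kappa(\delta,k')$ with $K\ne K'$. Then $\chi_{\delta+\lambda_K}=\chi_{\delta+\lambda_{K'}}$ if and only if $\delta$ is resonant, $i:=i(\delta,k)$ is defined, $\tilde\delta_i<k+K_i$, and $K'=K-d\,e_i$ where $d=k+K_i-\tilde\delta_i$.
   Context: $\mathfrak a_m\cong\mathfrak{sl}_{m+1}$ is the projective subalgebra $\mathrm{Span}\{\partial_{x_i},x_j\partial_{x_i},x_j\sum_rx_r\partial_{x_r}\}$ of polynomial vector fields on $\mathbb R^m$, with Cartan subalgebra $\mathfrak h_m=\mathrm{Span}\{x_i\partial_{x_i}\}$. Weights: $\mathfrak h_m^*=\{\lambda=\sum_{i=0}^m\lambda_i\epsilon_i:\sum\lambda_i=0\}$ with $\lambda(x_j\partial_{x_j})=\lambda_j$ ($1\le j\le m$). Let $\rho=\sum_{i=0}^m(\tfrac m2-i)\epsilon_i$; $S_{m+1}$ acts on $\mathfrak h_m^*$ by permuting indices $0,\dots,m$, $w\cdot\lambda=w(\lambda+\rho)-\rho$; $\chi_\lambda$ is the infinitesimal character of $\mathfrak a_m$ associated to $\lambda$ via the Harish-Chandra isomorphism, and $\chi_\lambda=\chi_{\lambda'}$ iff $\lambda'\in S_{m+1}\cdot\lambda$. $\lambda$ is $\mathfrak l_m$-dominant integral if $\lambda_i-\lambda_{i+1}\in\mathbb N$ for $1\le i<m$. $e_i$ is the $i$-th standard basis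 vector of $\mathbb Z^m$. For $K\in\mathbb N^m$: $|K|=\sum K_i$, $\lambda_K=|K|\epsilon_0-\sum_{i=1}^mK_i\epsilon_i$, $\kappa(\delta,k)=\{K\in\mathbb N^m:|K|=k,\ K_i\le\delta_i-\delta_{i+1}\text{ for }i<m\}$. For $\delta=(\delta_0,\dots,\delta_m)$ $\mathfrak l_m$-dominant integral: $i(\delta)\in\{1,\dots,m\}$ is maximal with $\delta_1=\cdots=\delta_{i(\delta)}$; $\tilde\delta_i=\delta_i-i-\delta_0$; $\delta$ is resonant if $\tilde\delta_{i(\delta)}\in\mathbb Z^+$; for $\delta$ resonant, $k\in\mathbb Z^+$ and $\tilde\delta_{i(\delta)}\ge k$, $i(\delta,k)\in\{i(\delta),\dots,m\}$ is maximal with $\tilde\delta_{i(\delta,k)}\ge k$; otherwise $i(\delta,k)$ is undefined. *)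

theory Defs
  imports Complex_Main "HOL-Combinatorics.Permutations"
begin

text \<open>Weights of sl_(m+1) are encoded as functions nat => complex, only the values at
indices 0..m matter. A weight lies in h_m^* iff its coordinates 0..m sum to zero.\<close>

definition is_weight :: "nat \<Rightarrow> (nat \<Rightarrow> complex) \<Rightarrow> bool" where
  "is_weight m lam \<longleftrightarrow> (\<Sum>i=0..m. lam i) = 0"

definition rho :: "nat \<Rightarrow> nat \<Rightarrow> complex" where
  "rho m i = of_nat m / 2 - of_nat i"

text \<open>Equality of infinitesimal characters chi_lambda = chi_mu, via the stated
characterisation: mu lies in the dot-orbit of lambda under S_(m+1), i.e.
mu + rho is a permutation of the coordinates of lambda + rho.\<close>

definition same_infchar :: "nat \<Rightarrow> (nat \<Rightarrow> complex) \<Rightarrow> (nat \<Rightarrow> complex) \<Rightarrow> bool" where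
  "same_infchar m lam \<mu> \<longleftrightarrow>
     (\<exists>p. p permutes {0..m} \<and> (\<forall>i\<le>m. \<mu> i + rho m i = lam (p i) + rho m (p i)))"

definition l_dom_int :: "nat \<Rightarrow> (nat \<Rightarrow> complex) \<Rightarrow> bool" where
  "l_dom_int m lam \<longleftrightarrow> (\<forall>i. 1 \<le> i \<and> i < m \<longrightarrow> (\<exists>n::nat. lam i - lam (Suc i) = of_nat n))"

text \<open>Elements K of N^m are functions nat => nat supported on {1..m}.\<close>

definition abs_K :: "nat \<Rightarrow> (nat \<Rightarrow> nat) \<Rightarrow> nat" where
  "abs_K m K = (\<Sum>i=1..m. K i)"

definition lamK :: "nat \<Rightarrow> (nat \<Rightarrow> nat) \<Rightarrow> nat \<Rightarrow> complex" where
  "lamK m K i = (if i = 0 then of_nat (abs_K m K) else - of_nat (K i))"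

definition kappa :: "nat \<Rightarrow> (nat \<Rightarrow> complex) \<Rightarrow> nat \<Rightarrow> (nat \<Rightarrow> nat) set" where
  "kappa m \<delta> k = {K. (\<forall>i. (i = 0 \<or> m < i) \<longrightarrow> K i = 0) \<and> abs_K m K = k \<and>
      (\<forall>i. 1 \<le> i \<and> i < m \<longrightarrow> (\<exists>n::nat. \<delta> i - \<delta> (Suc i) = of_nat n \<and> K i \<le> n))}"

definition i_delta :: "nat \<Rightarrow> (nat \<Rightarrow> complex) \<Rightarrow> nat" where
  "i_delta m \<delta> = (GREATEST i. 1 \<le> i \<and> i \<le> m \<and> (\<forall>j. 1 \<le> j \<and> j \<le> i \<longrightarrow> \<delta> j = \<delta> 1))"

definition dtilde :: "(nat \<Rightarrow> complex) \<Rightarrow> nat \<Rightarrow> complex" where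
  "dtilde \<delta> i = \<delta> i - of_nat i - \<delta> 0"

definition resonant :: "nat \<Rightarrow> (nat \<Rightarrow> complex) \<Rightarrow> bool" where
  "resonant m \<delta> \<longleftrightarrow> (\<exists>n::nat. 0 < n \<and> dtilde \<delta> (i_delta m \<delta>) = of_nat n)"

definition cge :: "complex \<Rightarrow> nat \<Rightarrow> bool" where
  "cge z k \<longleftrightarrow> Im z = 0 \<and> of_nat k \<le> Re z"

definition idk_defined :: "nat \<Rightarrow> (nat \<Rightarrow> complex) \<Rightarrow> nat \<Rightarrow> bool" where
  "idk_defined m \<delta> k \<longleftrightarrow> resonant m \<delta> \<and> 0 < k \<and> cge (dtilde \<delta> (i_delta m \<delta>)) k"

definition idk :: "nat \<Rightarrow> (nat \<Rightarrow> complex) \<Rightarrow> nat \<Rightarrow> nat" where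
  "idk m \<delta> k = (GREATEST i. i_delta m \<delta> \<le> i \<and> i \<le> m \<and> cge (dtilde \<delta> i) k)"

end

theory Submission
  imports Defs
begin

lemma dom_diff:
  assumes "l_dom_int m \<delta>" "1 \<le> l" "l \<le> j" "j \<le> m"
  shows "\<exists>n::nat. \<delta> l - \<delta> j = of_nat n"
  using assms(3,4)
proof (induction j rule: dec_induct)
  case base show ?case by (rule exI[of _ 0]) simp
next
  case (step q)
  then obtain a where a: "\<delta> l - \<delta> q = of_nat a" by auto
  have "1 \<le> q" "q < m" using step assms(2) by auto
  then obtain b where b: "\<delta> q - \<delta> (Suc q) = of_nat b"
    using assms(1) unfolding l_dom_int_def by blast
  have "\<delta> l - \<delta> (Suc q) = of_nat (a + b)" using a b
    by (simp add: algebra_simps)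
  then show ?case by blast
qed

lemma order_ne:
  assumes "l_dom_int m \<delta>" "K \<in> kappa m \<delta> k" "1 \<le> l" "l < j" "j \<le> m"
  shows "\<delta> j - of_nat (Kx j) - of_nat j \<noteq> \<delta> l - of_nat (K l) - of_nat l"
proof
  assume eq: "\<delta> j - of_nat (Kx j) - of_nat j = \<delta> l - of_nat (K l) - of_nat l"
  have "l < m" using assms by auto
  then obtain n1 where n1: "\<delta> l - \<delta> (Suc l) = of_nat n1" "K l \<le> n1"
    using assms(2,3) unfolding kappa_def by blast
  obtain n2 where n2: "\<delta> (Suc l) - \<delta> j = of_nat n2"
    using dom_diff[OF assms(1), of "Suc l" j] assms by auto
  obtain r where r: "n1 = K l + r" using n1(2) le_Suc_ex by blast
  obtain s where s: "j = Suc (l + s)" using assms(4) less_imp_Suc_add by auto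
  have dl: "\<delta> l = \<delta> j + of_nat (K l + r) + of_nat n2" using n1(1) n2 r
  proof -
    have "\<delta> l = (\<delta> l - \<delta> (Suc l)) + (\<delta> (Suc l) - \<delta> j) + \<delta> j" by simp
    also have "\<dots> = of_nat (K l + r) + of_nat n2 + \<delta> j" using n1(1) n2 r by simp
    finally show ?thesis by simp
  qed
  have "of_nat (Kx j + Suc s + r + n2) = (0::complex)"
    using eq unfolding dl s by (simp add: algebra_simps)
  then show False by (simp only: of_nat_eq_0_iff)
qed

lemma i_delta_props:
  assumes "1 \<le> m"
  shows "1 \<le> i_delta m \<delta> \<and> i_delta m \<delta> \<le> m \<and>
         (\<forall>j. 1 \<le> j \<and> j \<le> i_delta m \<delta> \<longrightarrow> \<delta> j = \<delta> 1)"
proof -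
  let ?P = "\<lambda>i. 1 \<le> i \<and> i \<le> m \<and> (\<forall>j. 1 \<le> j \<and> j \<le> i \<longrightarrow> \<delta> j = \<delta> 1)"
  have "?P 1" using assms by auto
  then have "?P (Greatest ?P)" by (rule GreatestI_nat[where b=m]) auto
  then show ?thesis unfolding i_delta_def by blast
qed

lemma kappa_out: "K \<in> kappa m \<delta> k \<Longrightarrow> (j = 0 \<or> m < j) \<Longrightarrow> K j = 0"
  by (auto simp add: kappa_def)

lemma kappa_bound: "K \<in> kappa m \<delta> k \<Longrightarrow> 1 \<le> i \<Longrightarrow> i < m \<Longrightarrow>
   \<exists>n::nat. \<delta> i - \<delta> (Suc i) = of_nat n \<and> K i \<le> n"
  by (simp add: kappa_def)

lemma kappa_abs: "K \<in> kappa m \<delta> k \<Longrightarrow> abs_K m K = k"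
  by (simp add: kappa_def)

theorem mainTheorem11:
  fixes m k k' :: nat and \<delta> :: "nat \<Rightarrow> complex" and K K' :: "nat \<Rightarrow> nat"
  assumes "1 \<le> m"
    and "is_weight m \<delta>"
    and "l_dom_int m \<delta>"
    and "k' \<le> k"
    and "K \<in> kappa m \<delta> k"
    and "K' \<in> kappa m \<delta> k'"
    and "K \<noteq> K'"
  shows "same_infchar m (\<lambda>j. \<delta> j + lamK m K j) (\<lambda>j. \<delta> j + lamK m K' j) \<longleftrightarrow>
    (resonant m \<delta> \<and> idk_defined m \<delta> k \<and>
     (let i = idk m \<delta> k; d = of_nat k + of_nat (K i) - dtilde \<delta> i in
        Im (dtilde \<delta> i) = 0 \<and> Re (dtilde \<delta> i) < of_nat k + of_nat (K i) \<and>
        (\<forall>j. j \<noteq> i \<longrightarrow> K' j = K j) \<and> of_nat (K' i) = of_nat (K i) - d))"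
proof
  assume "same_infchar m (\<lambda>j. \<delta> j + lamK m K j) (\<lambda>j. \<delta> j + lamK m K' j)"
  then obtain p where p: "p permutes {0..m}"
    and eq: "\<And>j. j \<le> m \<Longrightarrow> \<delta> j + lamK m K' j + rho m j = \<delta> (p j) + lamK m K (p j) + rho m (p j)"
    unfolding same_infchar_def by auto
  have pim: "\<And>j. j \<le> m \<Longrightarrow> p j \<le> m" using permutes_in_image[OF p] by auto
  have pinj: "\<And>a b. p a = p b \<Longrightarrow> a = b" using permutes_inj[OF p] by (meson injD)
  have eqj: "\<delta> j - of_nat (K' j) - of_nat j = \<delta> (p j) - of_nat (K (p j)) - of_nat (p j)"
    if "1 \<le> j" "j \<le> m" "p j \<noteq> 0" for j
    using eq[OF that(2)] that unfolding lamK_def rho_def by (simp add: algebra_simps)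
  have key: "p j = j" if j: "1 \<le> j" "j \<le> m" "p j \<noteq> 0" for j
  proof -
    have E: "\<delta> j - of_nat (K' j) - of_nat j = \<delta> (p j) - of_nat (K (p j)) - of_nat (p j)"
      using eqj j .
    have "\<not> p j < j" using order_ne[OF assms(3) assms(5), of "p j" j K'] E j by auto
    moreover have "\<not> j < p j" using order_ne[OF assms(3) assms(6), of j "p j" K] E j pim[OF j(2)]
      by auto
    ultimately show ?thesis by simp
  qed
  show "resonant m \<delta> \<and> idk_defined m \<delta> k \<and>
     (let i = idk m \<delta> k; d = of_nat k + of_nat (K i) - dtilde \<delta> i in
        Im (dtilde \<delta> i) = 0 \<and> Re (dtilde \<delta> i) < of_nat k + of_nat (K i) \<and>
        (\<forall>j. j \<noteq> i \<longrightarrow> K' j = K j) \<and> of_nat (K' i) = of_nat (K i) - d)"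
  proof (cases "p 0 = 0")
    case True
    have "K' j = K j" for j
    proof (cases "j = 0 \<or> m < j")
      case True then show ?thesis using kappa_out assms(5,6) by metis
    next
      case False
      then have j: "1 \<le> j" "j \<le> m" by auto
      have "p j \<noteq> 0"
      proof
        assume "p j = 0"
        then have "p j = p 0" using True by simp
        then have "j = 0" by (rule pinj)
        then show False using j by simp
      qed
      then have "p j = j" using key j by blast
      then show ?thesis using eqj[OF j \<open>p j \<noteq> 0\<close>] by simp
    qed
    then have "K = K'" by auto
    then show ?thesis using assms(7) by simp
  next
    case False
    define i where "i = p 0"
    have i: "1 \<le> i" "i \<le> m" using False pim[of 0] i_def by auto
    have pi: "p i = 0"
    proof (rule ccontr)
      assume "p i \<noteq> 0"
      then have "p i = i" using key i by blast
      then have "i = 0" using pinj i_def by metis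
      then show False using i by simp
    qed
    have Koth: "K' j = K j" if "j \<noteq> i" for j
    proof (cases "j = 0 \<or> m < j")
      case True then show ?thesis using kappa_out assms(5,6) by metis
    next
      case False
      then have j: "1 \<le> j" "j \<le> m" by auto
      then have "p j \<noteq> 0" using pi pinj that by metis
      then have "p j = j" using key j by blast
      then show ?thesis using eqj[OF j \<open>p j \<noteq> 0\<close>] by simp
    qed
    have abs: "abs_K m K = k" "abs_K m K' = k'" using kappa_abs assms(5,6) by auto
    have E0: "dtilde \<delta> i = of_nat k' + of_nat (K i)"
      using eq[of 0] i abs unfolding i_def[symmetric] lamK_def rho_def dtilde_def
      by (simp add: algebra_simps)
    have Ei: "dtilde \<delta> i = of_nat k + of_nat (K' i)"
      using eq[of i] i abs pi unfolding lamK_def rho_def dtilde_def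
      by (simp add: algebra_simps)
    have nat1: "k' + K i = k + K' i"
    proof -
      have "(of_nat (k' + K i) :: complex) = of_nat (k + K' i)" using E0 Ei by simp
      then show ?thesis by (simp only: of_nat_eq_iff)
    qed
    have "K' i \<noteq> K i"
    proof
      assume "K' i = K i"
      then have "K' = K" using Koth by (intro ext) metis
      then show False using assms(7) by simp
    qed
    then have lt: "K' i < K i" "k' < k" using nat1 assms(4) by auto
    obtain ip where ip: "1 \<le> ip" "ip \<le> m" "\<And>j. 1 \<le> j \<Longrightarrow> j \<le> ip \<Longrightarrow> \<delta> j = \<delta> 1"
      and ipdef: "ip = i_delta m \<delta>"
      using i_delta_props[OF assms(1), of \<delta>] by blast
    have ip_le: "ip \<le> i"
    proof (rule ccontr)
      assume "\<not> ip \<le> i"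
      then have lt0: "i < ip" by simp
      then have "i < m" using ip(2) by simp
      have "\<delta> i = \<delta> 1" using ip(3)[of i] i(1) lt0 by simp
      moreover have "\<delta> (Suc i) = \<delta> 1" using ip(3)[of "Suc i"] lt0 by simp
      ultimately have "\<delta> i = \<delta> (Suc i)" by simp
      obtain n where "\<delta> i - \<delta> (Suc i) = of_nat n" "K i \<le> n"
        using kappa_bound[OF assms(5) i(1) \<open>i < m\<close>] by blast
      then have "K i = 0" using \<open>\<delta> i = \<delta> (Suc i)\<close> by simp
      then show False using lt by simp
    qed
    obtain t where t: "\<delta> ip - \<delta> i = of_nat t" using dom_diff[OF assms(3) ip(1) ip_le i(2)] by blast
    obtain s where s: "i = ip + s" using ip_le le_Suc_ex by blast
    have dip: "dtilde \<delta> ip = of_nat (t + k + K' i + s)"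
    proof -
      have "dtilde \<delta> ip = (\<delta> ip - \<delta> i) + dtilde \<delta> i + of_nat s"
        unfolding dtilde_def s by (simp add: algebra_simps)
      then show ?thesis using t Ei by simp
    qed
    have res: "resonant m \<delta>" unfolding resonant_def ipdef[symmetric] dip
      using lt by (intro exI[of _ "t + k + K' i + s"]) auto
    have cgeip: "cge (dtilde \<delta> ip) k" unfolding dip cge_def by simp
    have idef: "idk_defined m \<delta> k" unfolding idk_defined_def ipdef[symmetric]
      using res cgeip lt by auto
    have cgei: "cge (dtilde \<delta> i) k" unfolding Ei cge_def by simp
    have idk: "idk m \<delta> k = i" unfolding idk_def ipdef[symmetric]
    proof (rule Greatest_equality)
      show "ip \<le> i \<and> i \<le> m \<and> cge (dtilde \<delta> i) k" using ip_le i cgei by auto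
    next
      fix y assume y: "ip \<le> y \<and> y \<le> m \<and> cge (dtilde \<delta> y) k"
      show "y \<le> i"
      proof (rule ccontr)
        assume "\<not> y \<le> i"
        then have "i < m" "Suc i \<le> y" using y by auto
        then obtain n1 where n1: "\<delta> i - \<delta> (Suc i) = of_nat n1" "K i \<le> n1"
          using kappa_bound[OF assms(5) i(1)] by blast
        obtain n2 where n2: "\<delta> (Suc i) - \<delta> y = of_nat n2"
          using dom_diff[OF assms(3), of "Suc i" y] \<open>Suc i \<le> y\<close> y by auto
        obtain u where u: "y = Suc i + u" using \<open>Suc i \<le> y\<close> le_Suc_ex by blast
        have "dtilde \<delta> y = dtilde \<delta> i - (\<delta> i - \<delta> (Suc i)) - (\<delta> (Suc i) - \<delta> y) - of_nat (Suc u)"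
          unfolding dtilde_def u by (simp add: algebra_simps)
        also have "\<dots> = of_nat k + of_nat (K' i) - of_nat n1 - of_nat n2 - of_nat (Suc u)"
          using Ei n1 n2 by simp
        finally have "Re (dtilde \<delta> y) = real k + real (K' i) - real n1 - real n2 - real (Suc u)"
          by simp
        moreover have "real k \<le> Re (dtilde \<delta> y)" using y unfolding cge_def by auto
        ultimately show False using lt n1(2) by simp
      qed
    qed
    show ?thesis
      unfolding idk Let_def using res idef Koth Ei lt by simp
  qed
next
  assume R: "resonant m \<delta> \<and> idk_defined m \<delta> k \<and>
     (let i = idk m \<delta> k; d = of_nat k + of_nat (K i) - dtilde \<delta> i in
        Im (dtilde \<delta> i) = 0 \<and> Re (dtilde \<delta> i) < of_nat k + of_nat (K i) \<and>
        (\<forall>j. j \<noteq> i \<longrightarrow> K' j = K j) \<and> of_nat (K' i) = of_nat (K i) - d)"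
  define i where "i = idk m \<delta> k"
  have Koth: "\<And>j. j \<noteq> i \<Longrightarrow> K' j = K j"
    and Ki: "of_nat (K' i) = of_nat (K i) - (of_nat k + of_nat (K i) - dtilde \<delta> i)"
    using R unfolding i_def[symmetric] Let_def by auto
  obtain ip where ip: "1 \<le> ip" "ip \<le> m" and ipdef: "ip = i_delta m \<delta>"
    using i_delta_props[OF assms(1), of \<delta>] by blast
  have cgeip: "cge (dtilde \<delta> ip) k" using R unfolding idk_defined_def ipdef by auto
  have "ip \<le> i \<and> i \<le> m \<and> cge (dtilde \<delta> i) k"
    unfolding i_def idk_def ipdef[symmetric]
    by (rule GreatestI_nat[where k=ip and b=m]) (use ip cgeip in auto)
  then have i: "1 \<le> i" "i \<le> m" using ip by auto
  have sumrel: "k' + K i = k + K' i"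
  proof -
    have fin: "finite {1..m}" by simp
    have im: "i \<in> {1..m}" using i by auto
    have "k = K i + (\<Sum>j\<in>{1..m} - {i}. K j)"
      using kappa_abs[OF assms(5)] sum.remove[OF fin im, of K] unfolding abs_K_def by simp
    moreover have "k' = K' i + (\<Sum>j\<in>{1..m} - {i}. K j)"
      using kappa_abs[OF assms(6)] sum.remove[OF fin im, of K'] Koth unfolding abs_K_def by simp
    ultimately show ?thesis by simp
  qed
  have dti: "dtilde \<delta> i = of_nat k + of_nat (K' i)" using Ki by (simp add: algebra_simps)
  have dti2: "dtilde \<delta> i = of_nat k' + of_nat (K i)"
  proof -
    have "(of_nat k + of_nat (K' i) :: complex) = of_nat (k + K' i)" by simp
    also have "\<dots> = of_nat (k' + K i)" using sumrel by simp
    finally show ?thesis using dti by simp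
  qed
  have abs: "abs_K m K = k" "abs_K m K' = k'" using kappa_abs assms(5,6) by auto
  show "same_infchar m (\<lambda>j. \<delta> j + lamK m K j) (\<lambda>j. \<delta> j + lamK m K' j)"
    unfolding same_infchar_def
  proof (intro exI conjI allI impI)
    show "transpose 0 i permutes {0..m}" using i by (intro permutes_swap_id) auto
  next
    fix j assume j: "j \<le> m"
    show "\<delta> j + lamK m K' j + rho m j =
      \<delta> (transpose 0 i j) + lamK m K (transpose 0 i j) + rho m (transpose 0 i j)"
    proof (cases "j = 0")
      case True
      then show ?thesis using dti2 abs i unfolding lamK_def rho_def dtilde_def
        by (simp add: algebra_simps)
    next
      case False
      show ?thesis
      proof (cases "j = i")
        case True
        then show ?thesis using dti abs i unfolding lamK_def rho_def dtilde_def
          by (simp add: algebra_simps)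
      next
        case False
        then show ?thesis using \<open>j \<noteq> 0\<close> Koth unfolding lamK_def by simp
      qed
    qed
  qed
qed

end
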